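(* Let $p\ge1$ and $1\le m\le p$, and let $u\in M_r^{(1)}$ satisfy $v(-t,m)u=0$ for all $1\le t\le p$ with $t\ne m$, and $v(-m,m)u=\alpha m u$ for some $\alpha\in\mathbb C$. Then $$v(m,m)(\det\mathbf V_p)u=2m^2(2\alpha+r-p+1)\det(\mathbf V_p^{(m)})u+(\det\mathbf V_p)v(m,m)u,$$ where $\mathbf V_p^{(m)}$ is the matrix obtained from $\mathbf V_p$ by deleting its $m$-th row and $m$-th column (with determinant $1$ when $p=1$).
   Context: Fix an integer $d\ge 2$ and $r\in\mathbb{C}$. Let $\hat{\mathfrak h}$ be the complex Lie algebra with basis $\{v^i(m)\mid 1\le i\le d,\ m\in\mathbb{Z}\}\cup\{\mathbf c\}$ and bracket $[v^i(m),v^j(n)]=\delta_{m+n,0}\delta_{i,j}\,m\,\mathbf c$, $[\mathbf c,\hat{\mathfrak h}]=0$. In $A=U(\hat{\mathfrak h})/\langle \mathbf c-1\rangle$ let $v^{ij}(m,n)$ be the image of $v^i(m)v^j(n)$; then $v^{ij}(m,n)=v^{ji}(n,m)$ unless $i=j$ and $m=-n$, and $v^{ii}(m,-m)=v^{ii}(-m,m)+m$. Let $\mathcal B=\{v^{ii}(m,n)\mid 1\le i\le d,\ m\le n\}\cup\{v^{ij}(m,n)\mid 1\le i<j\le d,\ m,n\in\mathbb Z\}$; then $\mathcal B\cup\{1\}$ is linearly independent, $\mathcal L:=\mathrm{span}_{\mathbb C}\mathcal B\oplus\mathbb C\subset A$ contains every $v^{ij}(m,n)$ and is closed under $[x,y]=xy-yx$.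 With $\pi_1,\pi_2$ the projections of $\mathcal L$ onto $\mathrm{span}\,\mathcal B$ and onto $\mathbb C$, $[x,y]_r=\pi_1([x,y])+r\pi_2([x,y])$ is a Lie bracket on $\mathcal L$; call this Lie algebra $\mathcal L_r$. Let $\mathcal B_+=\{v^{ij}(m,n)\in\mathcal B\mid m\ge 0\text{ or }n\ge 0\}$, $\mathcal L_r^+=\mathrm{span}\,\mathcal B_+\oplus\mathbb C$, and $M_r=U(\mathcal L_r)\otimes_{U(\mathcal L_r^+)}\mathbb C\mathbf 1$, where $\mathcal B_+$ acts by $0$ on $\mathbf 1$ and $s\in\mathbb C\subset\mathcal L_r$ acts by the scalar $s$. Let $\mathcal L_r^{(1)}$ be the Lie subalgebra of $\mathcal L_r$ generated by $\{v^{11}(m,n)\mid m,n\in\mathbb Z,\ m\le n\}$ and $M_r^{(1)}=U(\mathcal L_r^{(1)})\mathbf 1\subset M_r$. Write $v(m,n)=v^{11}(m,n)$. The elements $v(-s,-t)$ with $s,t>0$ pairwise commute in $U(\mathcal L_r)$, so determinants of matrices with such entries are well defined; $\mathbf V_p=(v(-s,-t))_{1\le s,t\le p}$ and $\det\mathbf V_p=\sum_{\sigma\in\mathfrak S_p}\mathrm{sgn}(\sigma)\prod_{q=1}^p v(-q,-\sigma(q))$. *)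

theory Defs
  imports Complex_Main "HOL-Combinatorics.Permutations"
begin

(* Generators of U(L_r): Some (i,j,m,n) stands for v^{ij}(m,n) (only those in the
   basis B are used), None stands for the element 1 of the summand C of L_r. *)
type_synonym gen = "(nat \<times> nat \<times> int \<times> int) option"
(* elements of L (finitely supported coefficient functions on generators) *)
type_synonym lelt = "gen \<Rightarrow> complex"
(* elements of the free associative algebra on the generators (noncommutative polynomials) *)
type_synonym felt = "gen list \<Rightarrow> complex"

(* g is a basis element of L_r, i.e. g \<in> B or g is the constant 1 *)
definition isgen :: "nat \<Rightarrow> gen \<Rightarrow> bool" where
  "isgen d g = (case g of None \<Rightarrow> True
     | Some (i,j,m,n) \<Rightarrow> 1 \<le> i \<and> i \<le> d \<and> 1 \<le> j \<and> j \<le> d \<and> (i < j \<or> (i = j \<and> m \<le> n)))"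

definition isBplus :: "nat \<Rightarrow> gen \<Rightarrow> bool" where
  "isBplus d g = (case g of None \<Rightarrow> False
     | Some (i,j,m,n) \<Rightarrow> isgen d g \<and> (0 \<le> m \<or> 0 \<le> n))"

definition single :: "gen \<Rightarrow> lelt" where
  "single g = (\<lambda>x. if x = g then 1 else 0)"

(* the element v^{ij}(m,n) of L expressed in the basis B \<union> {1}, using
   v^{ij}(m,n) = v^{ji}(n,m) unless i=j and m=-n, and v^{ii}(m,-m) = v^{ii}(-m,m) + m *)
definition vel :: "nat \<Rightarrow> nat \<Rightarrow> int \<Rightarrow> int \<Rightarrow> lelt" where
  "vel i j m n =
     (if i < j then single (Some (i,j,m,n))
      else if j < i then single (Some (j,i,n,m))
      else if m \<le> n then single (Some (i,i,m,n))
      else (\<lambda>x. single (Some (i,i,n,m)) x + (if m = - n then of_int m else 0) * single None x))"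

(* the scalar [v^i(m), v^j(n)] = \<delta>_{ij} \<delta>_{m+n,0} m  (with c = 1) *)
definition hpair :: "nat \<times> int \<Rightarrow> nat \<times> int \<Rightarrow> complex" where
  "hpair a b = (if fst a = fst b \<and> snd a + snd b = 0 then of_int (snd a) else 0)"

(* commutator in A of basis elements:
   [ab,cd] = [b,c] ad + [b,d] ac + [a,c] db + [a,d] cb  with a=v^i(m), b=v^j(n), c=v^k(p), d=v^l(q) *)
definition commA :: "gen \<Rightarrow> gen \<Rightarrow> lelt" where
  "commA g h = (case (g, h) of
      (Some (i,j,m,n), Some (k,l,p,q)) \<Rightarrow>
        (\<lambda>x. hpair (j,n) (k,p) * vel i l m q x + hpair (j,n) (l,q) * vel i k m p x
            + hpair (i,m) (k,p) * vel l j q n x + hpair (i,m) (l,q) * vel k j p n x)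
    | _ \<Rightarrow> (\<lambda>x. 0))"

(* the bracket [x,y]_r = \<pi>_1([x,y]) + r \<pi>_2([x,y]) *)
definition brr :: "complex \<Rightarrow> gen \<Rightarrow> gen \<Rightarrow> lelt" where
  "brr r g h = (let f = commA g h in f(None := r * f None))"

definition wd :: "gen list \<Rightarrow> felt" where
  "wd w = (\<lambda>x. if x = w then 1 else 0)"

definition liftL :: "lelt \<Rightarrow> felt" where
  "liftL l = (\<lambda>x. case x of [g] \<Rightarrow> l g | _ \<Rightarrow> 0)"

definition fmul :: "felt \<Rightarrow> felt \<Rightarrow> felt" where
  "fmul f g = (\<lambda>x. \<Sum>i\<le>length x. f (take i x) * g (drop i x))"

(* Kernel of the surjection  F \<rightarrow> M_r,  f \<mapsto> f \<cdot> 1:  the sum of the two-sided ideal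
   defining U(L_r) and the left ideal generated by B_+ and by (s - s\<cdot>1) for s \<in> C \<subseteq> L_r *)
inductive_set Jr :: "nat \<Rightarrow> complex \<Rightarrow> felt set" for d :: nat and r :: complex where
  J_zero: "(\<lambda>_. 0) \<in> Jr d r"
| J_add: "f \<in> Jr d r \<Longrightarrow> g \<in> Jr d r \<Longrightarrow> (\<lambda>x. f x + g x) \<in> Jr d r"
| J_smult: "f \<in> Jr d r \<Longrightarrow> (\<lambda>x. c * f x) \<in> Jr d r"
| J_comm: "isgen d x \<Longrightarrow> isgen d y \<Longrightarrow> \<forall>g\<in>set u. isgen d g \<Longrightarrow> \<forall>g\<in>set w. isgen d g \<Longrightarrow>
     (\<lambda>z. wd (u @ [x, y] @ w) z - wd (u @ [y, x] @ w) z
          - fmul (wd u) (fmul (liftL (brr r x y)) (wd w)) z) \<in> Jr d r"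
| J_pos: "isBplus d x \<Longrightarrow> \<forall>g\<in>set u. isgen d g \<Longrightarrow> wd (u @ [x]) \<in> Jr d r"
| J_const: "\<forall>g\<in>set u. isgen d g \<Longrightarrow> (\<lambda>z. wd (u @ [None]) z - wd u z) \<in> Jr d r"

(* equality of f\<cdot>1 and g\<cdot>1 in M_r *)
definition eqM :: "nat \<Rightarrow> complex \<Rightarrow> felt \<Rightarrow> felt \<Rightarrow> bool" where
  "eqM d r f g \<longleftrightarrow> (\<lambda>x. f x - g x) \<in> Jr d r"

(* representatives of elements of U(L_r^{(1)}): polynomials in the v^{11}(m,n), m \<le> n *)
definition A1 :: "felt set" where
  "A1 = {f. finite {x. f x \<noteq> 0} \<and>
            (\<forall>x. f x \<noteq> 0 \<longrightarrow> (\<forall>g\<in>set x. \<exists>m n. m \<le> n \<and> g = Some (1, 1, m, n)))}"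

(* v(m,n) = v^{11}(m,n) as element of U(L_r) *)
definition vF :: "int \<Rightarrow> int \<Rightarrow> felt" where
  "vF m n = liftL (vel 1 1 m n)"

definition prodF :: "felt list \<Rightarrow> felt" where
  "prodF xs = foldr fmul xs (wd [])"

(* det of the matrix (v(-s,-t))_{s,t \<in> S}, rows/columns ordered increasingly:
   \<Sum>_\<sigma> sgn \<sigma> \<Prod>_{q \<in> S, increasing} v(-q,-\<sigma> q) *)
definition detS :: "nat set \<Rightarrow> felt" where
  "detS S = (\<lambda>x. \<Sum>\<sigma>\<in>{\<sigma>. \<sigma> permutes S}.
      of_int (sign \<sigma>) * prodF (map (\<lambda>q. vF (- int q) (- int (\<sigma> q))) (sorted_list_of_set S)) x)"

end

theory Submission
  imports Defs
begin


lemma fmul_assoc: "fmul (fmul f g) h = fmul f (fmul g h)"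
proof
  fix x :: "gen list"
  define n where "n = length x"
  define G where "G = (\<lambda>j l. f (take j x) * g (take l (drop j x)) * h (drop (j+l) x))"
  have L: "fmul (fmul f g) h x = (\<Sum>k\<le>n. \<Sum>j\<le>k. G j (k - j))"
    unfolding fmul_def n_def[symmetric]
    apply (simp add: sum_distrib_right)
    apply (rule sum.cong, simp)
    apply (rule sum.cong)
     apply (simp add: n_def)
    apply (simp add: G_def drop_take)
    done
  also have "\<dots> = (\<Sum>(j,l)\<in>{(j,l). j+l \<le> n}. G j l)"
    by (rule sum.triangle_reindex_eq[symmetric])
  also have "\<dots> = (\<Sum>j\<le>n. \<Sum>l\<le>n-j. G j l)"
  proof -
    have "{(j,l). j+l \<le> n} = Sigma {..n} (\<lambda>j. {..n-j})" by auto
    then show ?thesis by (simp add: sum.Sigma)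
  qed
  also have "\<dots> = fmul f (fmul g h) x"
    unfolding fmul_def n_def
    apply (simp add: sum_distrib_left)
    apply (rule sum.cong, simp)
    apply (rule sum.cong, simp)
    apply (simp add: G_def mult.assoc add.commute)
    done
  finally show "fmul (fmul f g) h x = fmul f (fmul g h) x" .
qed

lemma fmul_wd_left: "fmul (wd u) g = (\<lambda>x. if take (length u) x = u then g (drop (length u) x) else 0)"
proof
  fix x
  have "fmul (wd u) g x = (\<Sum>i\<le>length x. if i = length u then (if take (length u) x = u then g (drop (length u) x) else 0) else 0)"
    unfolding fmul_def wd_def
    by (rule sum.cong) (auto simp: min_absorb2)
  also have "\<dots> = (if take (length u) x = u then g (drop (length u) x) else 0)"
    by (auto simp: min_def dest: arg_cong[where f=length])
  finally show "fmul (wd u) g x = (if take (length u) x = u then g (drop (length u) x) else 0)" .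
qed

lemma wd_wd: "fmul (wd u) (wd v) = wd (u @ v)"
  unfolding fmul_wd_left by (auto simp: wd_def fun_eq_iff) (metis append_take_drop_id)

lemma wd_Nil: "fmul (wd []) g = g"
  by (simp add: fmul_wd_left)

lemma fmul_wd_wd_assoc: "fmul (wd u) (fmul (wd v) g) = fmul (wd (u @ v)) g"
  by (simp add: fmul_assoc[symmetric] wd_wd)

lemma fmul_add_right: "fmul f (\<lambda>x. g x + h x) = (\<lambda>x. fmul f g x + fmul f h x)"
  by (simp add: fmul_def fun_eq_iff distrib_left sum.distrib)
lemma fmul_diff_right: "fmul f (\<lambda>x. g x - h x) = (\<lambda>x. fmul f g x - fmul f h x)"
  by (simp add: fmul_def fun_eq_iff right_diff_distrib sum_subtractf)
lemma fmul_smult_right: "fmul f (\<lambda>x. c * g x) = (\<lambda>x. c * fmul f g x)"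
  by (simp add: fmul_def fun_eq_iff sum_distrib_left mult_ac)
lemma fmul_zero_right: "fmul f (\<lambda>x. 0) = (\<lambda>x. 0)"
  by (simp add: fmul_def fun_eq_iff)
lemma fmul_add_left: "fmul (\<lambda>x. g x + h x) f = (\<lambda>x. fmul g f x + fmul h f x)"
  by (simp add: fmul_def fun_eq_iff distrib_right sum.distrib)
lemma fmul_diff_left: "fmul (\<lambda>x. g x - h x) f = (\<lambda>x. fmul g f x - fmul h f x)"
  by (simp add: fmul_def fun_eq_iff left_diff_distrib sum_subtractf)
lemma fmul_smult_left: "fmul (\<lambda>x. c * g x) f = (\<lambda>x. c * fmul g f x)"
  by (simp add: fmul_def fun_eq_iff sum_distrib_left mult_ac)
lemma fmul_zero_left: "fmul (\<lambda>x. 0) f = (\<lambda>x. 0)"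
  by (simp add: fmul_def fun_eq_iff)
lemma fmul_sum_left: "fmul (\<lambda>x. \<Sum>i\<in>I. c i * g i x) f = (\<lambda>x. \<Sum>i\<in>I. c i * fmul (g i) f x)"
  by (simp add: fmul_def fun_eq_iff sum_distrib_left sum_distrib_right mult_ac sum.swap[where A=I])
lemma fmul_sum_right: "fmul f (\<lambda>x. \<Sum>i\<in>I. c i * g i x) = (\<lambda>x. \<Sum>i\<in>I. c i * fmul f (g i) x)"
  by (simp add: fmul_def fun_eq_iff sum_distrib_left sum_distrib_right mult_ac sum.swap[where A=I])

lemma liftL_single: "liftL (single g) = wd [g]"
  by (auto simp: liftL_def single_def wd_def fun_eq_iff split: list.split)
lemma liftL_add: "liftL (\<lambda>x. f x + g x) = (\<lambda>x. liftL f x + liftL g x)"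
  by (auto simp: liftL_def fun_eq_iff split: list.split)
lemma liftL_smult: "liftL (\<lambda>x. c * f x) = (\<lambda>x. c * liftL f x)"
  by (auto simp: liftL_def fun_eq_iff split: list.split)
lemma liftL_zero: "liftL (\<lambda>x. 0) = (\<lambda>x. 0)"
  by (auto simp: liftL_def fun_eq_iff split: list.split)



definition goodA :: "nat \<Rightarrow> felt \<Rightarrow> bool" where
  "goodA d a \<longleftrightarrow> finite {x. a x \<noteq> 0} \<and> (\<forall>x. a x \<noteq> 0 \<longrightarrow> (\<forall>g\<in>set x. isgen d g))"

lemma decomp: "finite {x. a x \<noteq> 0} \<Longrightarrow> a = (\<lambda>z. \<Sum>v\<in>{x. a x \<noteq> 0}. a v * wd v z)"
proof
  fix z assume fin: "finite {x. a x \<noteq> 0}"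
  have "(\<Sum>v\<in>{x. a x \<noteq> 0}. a v * wd v z) = (\<Sum>v\<in>{x. a x \<noteq> 0}. if v = z then a z else 0)"
    by (rule sum.cong) (auto simp: wd_def)
  also have "\<dots> = a z" using fin by (simp add: sum.delta')
  finally show "a z = (\<Sum>v\<in>{x. a x \<noteq> 0}. a v * wd v z)" by simp
qed

lemma brr_None_left: "brr r None y = (\<lambda>_. 0)"
  by (simp add: brr_def commA_def fun_eq_iff)
lemma brr_None_right: "brr r x None = (\<lambda>_. 0)"
  by (cases x) (auto simp: brr_def commA_def fun_eq_iff)

context
  fixes d :: nat and r :: complex
begin

lemma Jr_sum: "finite I \<Longrightarrow> (\<And>i. i \<in> I \<Longrightarrow> j i \<in> Jr d r) \<Longrightarrow> (\<lambda>x. \<Sum>i\<in>I. c i * j i x) \<in> Jr d r"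
proof (induction I rule: finite_induct)
  case empty
  then show ?case by (simp add: J_zero)
next
  case (insert i I)
  have "(\<lambda>x. c i * j i x + (\<Sum>i\<in>I. c i * j i x)) \<in> Jr d r"
    using insert by (intro J_add J_smult) auto
  then show ?case using insert by simp
qed

lemma eq_refl: "eqM d r f f"
  unfolding eqM_def using J_zero by simp

lemma eq_of_eq: "f = g \<Longrightarrow> eqM d r f g"
  using eq_refl by simp

lemma eq_sym: "eqM d r f g \<Longrightarrow> eqM d r g f"
  unfolding eqM_def by (drule J_smult[where c="-1"]) simp

lemma eq_trans: "eqM d r f g \<Longrightarrow> eqM d r g h \<Longrightarrow> eqM d r f h"
  unfolding eqM_def by (drule (1) J_add) simp

lemma eq_add: "eqM d r f1 g1 \<Longrightarrow> eqM d r f2 g2 \<Longrightarrow> eqM d r (\<lambda>x. f1 x + f2 x) (\<lambda>x. g1 x + g2 x)"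
  unfolding eqM_def by (drule (1) J_add) (simp add: algebra_simps)

lemma eq_smult: "eqM d r f g \<Longrightarrow> eqM d r (\<lambda>x. c * f x) (\<lambda>x. c * g x)"
  unfolding eqM_def by (drule J_smult[where c=c]) (simp add: algebra_simps)

lemma eq_sum: assumes "finite I" "\<And>i. i \<in> I \<Longrightarrow> eqM d r (f i) (g i)" shows
   "eqM d r (\<lambda>x. \<Sum>i\<in>I. c i * f i x) (\<lambda>x. \<Sum>i\<in>I. c i * g i x)"
proof -
  have "(\<lambda>x. \<Sum>i\<in>I. c i * (f i x - g i x)) \<in> Jr d r"
    using assms unfolding eqM_def by (intro Jr_sum) auto
  moreover have "(\<lambda>x. \<Sum>i\<in>I. c i * (f i x - g i x)) = (\<lambda>x. (\<Sum>i\<in>I. c i * f i x) - (\<Sum>i\<in>I. c i * g i x))"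
    by (simp add: right_diff_distrib sum_subtractf)
  ultimately show ?thesis unfolding eqM_def by simp
qed

lemma Jr_left: "j \<in> Jr d r \<Longrightarrow> \<forall>g\<in>set v. isgen d g \<Longrightarrow> fmul (wd v) j \<in> Jr d r"
proof (induction rule: Jr.induct)
  case J_zero
  then show ?case by (simp add: fmul_zero_right Jr.J_zero)
next
  case (J_add f g)
  then show ?case by (simp add: fmul_add_right Jr.J_add)
next
  case (J_smult f c)
  then show ?case by (simp add: fmul_smult_right Jr.J_smult)
next
  case (J_comm x y u w)
  have "fmul (wd v) (\<lambda>z. wd (u @ [x, y] @ w) z - wd (u @ [y, x] @ w) z - fmul (wd u) (fmul (liftL (brr r x y)) (wd w)) z)
     = (\<lambda>z. wd ((v @ u) @ [x, y] @ w) z - wd ((v @ u) @ [y, x] @ w) z - fmul (wd (v @ u)) (fmul (liftL (brr r x y)) (wd w)) z)"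
    by (simp add: fmul_diff_right wd_wd fmul_wd_wd_assoc)
  then show ?case using J_comm Jr.J_comm[where d=d and r=r and u="v@u" and w=w and x=x and y=y] by auto
next
  case (J_pos x u)
  then show ?case using Jr.J_pos[where d=d and r=r and u="v@u" and x=x] by (auto simp: wd_wd)
next
  case (J_const u)
  then show ?case using Jr.J_const[where d=d and r=r and u="v@u"] by (auto simp: wd_wd fmul_diff_right)
qed

lemma eq_left: "eqM d r f g \<Longrightarrow> \<forall>x\<in>set v. isgen d x \<Longrightarrow> eqM d r (fmul (wd v) f) (fmul (wd v) g)"
  using Jr_left[of "\<lambda>x. f x - g x" v] unfolding eqM_def by (simp add: fmul_diff_right)

lemma Jr_right: assumes "goodA d a" and "\<And>v. \<forall>g\<in>set v. isgen d g \<Longrightarrow> fmul E (wd v) \<in> Jr d r"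
  shows "fmul E a \<in> Jr d r"
proof -
  have fin: "finite {x. a x \<noteq> 0}" using assms(1) unfolding goodA_def by blast
  have "fmul E a = fmul E (\<lambda>z. \<Sum>v\<in>{x. a x \<noteq> 0}. a v * wd v z)"
    by (rule arg_cong[where f="fmul E", OF decomp[OF fin]])
  also have "\<dots> = (\<lambda>z. \<Sum>v\<in>{x. a x \<noteq> 0}. a v * fmul E (wd v) z)"
    by (rule fmul_sum_right)
  finally have eq: "fmul E a = (\<lambda>z. \<Sum>v\<in>{x. a x \<noteq> 0}. a v * fmul E (wd v) z)" .
  have "(\<lambda>z. \<Sum>v\<in>{x. a x \<noteq> 0}. a v * fmul E (wd v) z) \<in> Jr d r"
  proof (rule Jr_sum[OF fin])
    fix v assume "v \<in> {x. a x \<noteq> 0}"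
    then have "\<forall>g\<in>set v. isgen d g" using assms(1) unfolding goodA_def by blast
    then show "fmul E (wd v) \<in> Jr d r" by (rule assms(2))
  qed
  then show ?thesis using eq by simp
qed

lemma eq_comm:
  assumes "goodA d a" "isgen d x" "isgen d y" "\<forall>g\<in>set u. isgen d g" "\<forall>g\<in>set w. isgen d g"
  shows "eqM d r (fmul (wd (u @ [x, y] @ w)) a)
     (\<lambda>z. fmul (wd (u @ [y, x] @ w)) a z + fmul (fmul (wd u) (fmul (liftL (brr r x y)) (wd w))) a z)"
proof -
  define E where "E = (\<lambda>z. wd (u @ [x, y] @ w) z - wd (u @ [y, x] @ w) z - fmul (wd u) (fmul (liftL (brr r x y)) (wd w)) z)"
  have "fmul E a \<in> Jr d r"
  proof (rule Jr_right[OF assms(1)])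
    fix v :: "gen list" assume v: "\<forall>g\<in>set v. isgen d g"
    have "fmul E (wd v) = (\<lambda>z. wd (u @ [x, y] @ (w @ v)) z - wd (u @ [y, x] @ (w @ v)) z - fmul (wd u) (fmul (liftL (brr r x y)) (wd (w @ v))) z)"
      unfolding E_def by (simp add: fmul_diff_left wd_wd fmul_assoc)
    moreover have "(\<lambda>z. wd (u @ [x, y] @ (w @ v)) z - wd (u @ [y, x] @ (w @ v)) z - fmul (wd u) (fmul (liftL (brr r x y)) (wd (w @ v))) z) \<in> Jr d r"
      using assms v by (intro Jr.J_comm) auto
    ultimately show "fmul E (wd v) \<in> Jr d r" by simp
  qed
  then show ?thesis unfolding eqM_def E_def by (simp add: fmul_diff_left fmul_add_left diff_diff_eq)
qed

lemma Jr_None: "\<forall>g\<in>set u. isgen d g \<Longrightarrow> \<forall>g\<in>set v. isgen d g \<Longrightarrow> (\<lambda>z. wd (u @ [None] @ v) z - wd (u @ v) z) \<in> Jr d r"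
proof (induction v arbitrary: u)
  case Nil
  then show ?case using J_const by simp
next
  case (Cons y v)
  have "isgen d None" by (simp add: isgen_def)
  then have 1: "(\<lambda>z. wd (u @ [None, y] @ v) z - wd (u @ [y, None] @ v) z - fmul (wd u) (fmul (liftL (brr r None y)) (wd v)) z) \<in> Jr d r"
    using Cons by (intro Jr.J_comm) auto
  have 2: "(\<lambda>z. wd ((u @ [y]) @ [None] @ v) z - wd ((u @ [y]) @ v) z) \<in> Jr d r"
    using Cons.prems by (intro Cons.IH) auto
  from J_add[OF 1 2] show ?case by (simp add: brr_None_left liftL_zero fmul_zero_left fmul_zero_right)
qed

lemma eq_None:
  assumes "goodA d a" "\<forall>g\<in>set u. isgen d g" "\<forall>g\<in>set w. isgen d g"
  shows "eqM d r (fmul (wd (u @ [None] @ w)) a) (fmul (wd (u @ w)) a)"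
proof -
  have "fmul (\<lambda>z. wd (u @ [None] @ w) z - wd (u @ w) z) a \<in> Jr d r"
  proof (rule Jr_right[OF assms(1)])
    fix v :: "gen list" assume v: "\<forall>g\<in>set v. isgen d g"
    show "fmul (\<lambda>z. wd (u @ [None] @ w) z - wd (u @ w) z) (wd v) \<in> Jr d r"
    proof -
      have "(\<lambda>z. wd (u @ [None] @ (w @ v)) z - wd (u @ (w @ v)) z) \<in> Jr d r"
        using assms v by (intro Jr_None) auto
      then show ?thesis by (simp add: fmul_diff_left wd_wd)
    qed
  qed
  then show ?thesis unfolding eqM_def by (simp add: fmul_diff_left)
qed

end




definition Wg :: "nat \<Rightarrow> nat \<Rightarrow> gen" where
  "Wg s t = Some (1, 1, - int (max s t), - int (min s t))"
definition Zg :: "nat \<Rightarrow> nat \<Rightarrow> gen" where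
  "Zg k m = Some (1, 1, - int k, int m)"
definition Xg :: "nat \<Rightarrow> gen" where
  "Xg m = Some (1, 1, int m, int m)"

lemma Wg_sym: "Wg s t = Wg t s"
  by (simp add: Wg_def max.commute min.commute)

lemma isgen_Wg: "d \<ge> 1 \<Longrightarrow> isgen d (Wg s t)"
  by (simp add: isgen_def Wg_def)
lemma isgen_Zg: "d \<ge> 1 \<Longrightarrow> isgen d (Zg k m)"
  by (simp add: isgen_def Zg_def)
lemma isgen_Xg: "d \<ge> 1 \<Longrightarrow> isgen d (Xg m)"
  by (simp add: isgen_def Xg_def)
lemma isgen_None: "isgen d None"
  by (simp add: isgen_def)

lemma brr_WW: "s \<ge> 1 \<Longrightarrow> t \<ge> 1 \<Longrightarrow> s' \<ge> 1 \<Longrightarrow> t' \<ge> 1 \<Longrightarrow> brr r (Wg s t) (Wg s' t') = (\<lambda>_. 0)"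
  by (auto simp: brr_def commA_def hpair_def Wg_def fun_eq_iff)

lemma brr_XW: "s \<noteq> m \<Longrightarrow> t \<noteq> m \<Longrightarrow> brr r (Xg m) (Wg s t) = (\<lambda>_. 0)"
  by (auto simp: brr_def commA_def hpair_def Wg_def Xg_def fun_eq_iff max_def min_def)

lemma brr_ZW: "k \<ge> 1 \<Longrightarrow> s \<ge> 1 \<Longrightarrow> t \<ge> 1 \<Longrightarrow> s \<noteq> m \<Longrightarrow> t \<noteq> m \<Longrightarrow> brr r (Zg k m) (Wg s t) = (\<lambda>_. 0)"
  by (auto simp: brr_def commA_def hpair_def Wg_def Zg_def fun_eq_iff max_def min_def)

lemma brr_XWmm: "m \<ge> 1 \<Longrightarrow> brr r (Xg m) (Wg m m) =
   (\<lambda>x. (4 * of_nat m) * single (Zg m m) x + (2 * r * of_nat m ^ 2) * single None x)"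
  by (auto simp: brr_def commA_def hpair_def Wg_def Xg_def Zg_def vel_def single_def fun_eq_iff power2_eq_square)

lemma brr_XWmb: "m \<ge> 1 \<Longrightarrow> b \<ge> 1 \<Longrightarrow> b \<noteq> m \<Longrightarrow> brr r (Xg m) (Wg m b) =
   (\<lambda>x. (2 * of_nat m) * single (Zg b m) x)"
  by (auto simp: brr_def commA_def hpair_def Wg_def Xg_def Zg_def vel_def single_def fun_eq_iff max_def min_def)

lemma brr_ZWam: "m \<ge> 1 \<Longrightarrow> b \<ge> 1 \<Longrightarrow> a \<ge> 1 \<Longrightarrow> b \<noteq> m \<Longrightarrow> a \<noteq> m \<Longrightarrow> brr r (Zg b m) (Wg a m) =
   (\<lambda>x. of_nat m * single (Wg a b) x)"
  by (auto simp: brr_def commA_def hpair_def Wg_def Xg_def Zg_def vel_def single_def fun_eq_iff max_def min_def)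

lemma lift_wd3: "fmul (wd u) (fmul (wd [g]) (wd w)) = wd (u @ [g] @ w)"
  by (simp add: wd_wd)

context fixes d :: nat and r :: complex and a :: felt
  assumes ga: "goodA d a"
begin

abbreviation act :: "gen list \<Rightarrow> felt" where "act w \<equiv> fmul (wd w) a"

lemma eq_comm0:
  assumes "isgen d x" "isgen d y" "\<forall>g\<in>set u. isgen d g" "\<forall>g\<in>set w. isgen d g"
    and "brr r x y = (\<lambda>_. 0)"
  shows "eqM d r (act (u @ [x, y] @ w)) (act (u @ [y, x] @ w))"
  using eq_comm[OF ga assms(1-4), of r] assms(5)
  by (simp add: liftL_zero fmul_zero_left fmul_zero_right)

lemma eq_comm1:
  assumes "isgen d x" "isgen d y" "\<forall>g\<in>set u. isgen d g" "\<forall>g\<in>set w. isgen d g"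
    and "brr r x y = (\<lambda>z. c * single g z)"
  shows "eqM d r (act (u @ [x, y] @ w)) (\<lambda>z. act (u @ [y, x] @ w) z + c * act (u @ [g] @ w) z)"
  using eq_comm[OF ga assms(1-4), of r] assms(5)
  by (simp add: liftL_smult liftL_single fmul_smult_left fmul_smult_right lift_wd3)

lemma eq_comm2:
  assumes "isgen d x" "isgen d y" "\<forall>g\<in>set u. isgen d g" "\<forall>g\<in>set w. isgen d g"
    and "brr r x y = (\<lambda>z. c1 * single g1 z + c2 * single g2 z)"
  shows "eqM d r (act (u @ [x, y] @ w)) (\<lambda>z. act (u @ [y, x] @ w) z + (c1 * act (u @ [g1] @ w) z + c2 * act (u @ [g2] @ w) z))"
  using eq_comm[OF ga assms(1-4), of r] assms(5)
  by (simp add: liftL_add liftL_smult liftL_single fmul_smult_left fmul_smult_right fmul_add_left fmul_add_right lift_wd3)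

lemma eq_pass:
  assumes "isgen d x" "\<forall>y\<in>set R. isgen d y \<and> brr r x y = (\<lambda>_. 0)" "\<forall>g\<in>set u. isgen d g" "\<forall>g\<in>set w. isgen d g"
  shows "eqM d r (act (u @ [x] @ R @ w)) (act (u @ R @ [x] @ w))"
  using assms(2,3)
proof (induction R arbitrary: u)
  case Nil
  then show ?case by (simp add: eq_refl)
next
  case (Cons y R)
  have 1: "eqM d r (act (u @ [x, y] @ (R @ w))) (act (u @ [y, x] @ (R @ w)))"
    using Cons.prems assms by (intro eq_comm0) auto
  have 2: "eqM d r (act ((u @ [y]) @ [x] @ R @ w)) (act ((u @ [y]) @ R @ [x] @ w))"
    using Cons.prems by (intro Cons.IH) auto
  show ?case using eq_trans[OF 1] 2 by simp
qed

lemma eq_pass_left: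
  assumes "isgen d x" "\<forall>y\<in>set R. isgen d y \<and> brr r y x = (\<lambda>_. 0)" "\<forall>g\<in>set u. isgen d g" "\<forall>g\<in>set w. isgen d g"
  shows "eqM d r (act (u @ R @ [x] @ w)) (act (u @ [x] @ R @ w))"
  using assms(2,3)
proof (induction R arbitrary: u)
  case Nil
  then show ?case by (simp add: eq_refl)
next
  case (Cons y R)
  have 1: "eqM d r (act (u @ [y, x] @ (R @ w))) (act (u @ [x, y] @ (R @ w)))"
    using Cons.prems assms by (intro eq_comm0) auto
  have 2: "eqM d r (act ((u @ [y]) @ R @ [x] @ w)) (act ((u @ [y]) @ [x] @ R @ w))"
    using Cons.prems by (intro Cons.IH) auto
  show ?case using eq_trans[OF 2] 1 by simp
qed

lemma eq_reorder:
  assumes G: "\<forall>g\<in>G. isgen d g" "\<forall>g\<in>G. \<forall>h\<in>G. brr r g h = (\<lambda>_. 0)"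
  and "set R \<subseteq> G" "mset R = mset R'" "\<forall>g\<in>set u. isgen d g" "\<forall>g\<in>set w. isgen d g"
  shows "eqM d r (act (u @ R @ w)) (act (u @ R' @ w))"
  using assms(3-5)
proof (induction R arbitrary: u R')
  case Nil
  then show ?case by (simp add: eq_refl)
next
  case (Cons x R)
  have "x \<in> set R'" using Cons.prems(2) by (metis list.set_intros(1) set_mset_mset)
  then obtain Ra Rb where R': "R' = Ra @ x # Rb" by (meson split_list)
  have sR': "set R' \<subseteq> G" using Cons.prems by (metis set_mset_mset)
  have 1: "eqM d r (act (u @ Ra @ [x] @ (Rb @ w))) (act (u @ [x] @ Ra @ (Rb @ w)))"
    using sR' R' G Cons.prems assms(6) by (intro eq_pass_left) auto
  have ms: "mset R = mset (Ra @ Rb)" using Cons.prems(2) R' by simp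
  have 2: "eqM d r (act ((u @ [x]) @ R @ w)) (act ((u @ [x]) @ (Ra @ Rb) @ w))"
    using Cons.prems G ms by (intro Cons.IH) auto
  from 2 have h2: "eqM d r (act (u @ x # R @ w)) (act (u @ x # Ra @ Rb @ w))" by simp
  from 1 have h1: "eqM d r (act (u @ Ra @ x # Rb @ w)) (act (u @ x # Ra @ Rb @ w))" by simp
  show ?case using eq_trans[OF h2 eq_sym[OF h1]] R' by simp
qed

end




declare eq_trans[trans]

definition Gm :: "nat \<Rightarrow> gen set" where
  "Gm m = {Wg s t | s t. s \<ge> 1 \<and> t \<ge> 1 \<and> s \<noteq> m \<and> t \<noteq> m}"

definition WL :: "(nat \<Rightarrow> nat) \<Rightarrow> nat set \<Rightarrow> gen list" where
  "WL \<sigma> A = map (\<lambda>q. Wg q (\<sigma> q)) (sorted_list_of_set A)"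

definition Gall :: "gen set" where "Gall = {Wg s t | s t. s \<ge> 1 \<and> t \<ge> 1}"

context fixes d :: nat and r :: complex and a :: felt and m p :: nat and \<alpha> :: complex
  assumes ga: "goodA d a" and d1: "d \<ge> 1" and m1: "m \<ge> 1"
  and H0: "\<And>t. t \<in> {1..p} \<Longrightarrow> t \<noteq> m \<Longrightarrow> eqM d r (fmul (wd [Zg t m]) a) (\<lambda>_. 0)"
  and mp: "m \<le> p"
  and H1: "eqM d r (fmul (wd [Zg m m]) a) (\<lambda>x. \<alpha> * of_nat m * a x)"
begin


lemma mset_WL: "finite A \<Longrightarrow> mset (WL \<sigma> A) = image_mset (\<lambda>q. Wg q (\<sigma> q)) (mset_set A)"
  unfolding WL_def by (simp add: mset_map) (metis mset_sorted_list_of_multiset sorted_list_of_mset_set)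

lemma set_WL: "finite A \<Longrightarrow> set (WL \<sigma> A) = (\<lambda>q. Wg q (\<sigma> q)) ` A"
  unfolding WL_def by simp


lemma Gall_isgen: "d \<ge> 1 \<Longrightarrow> \<forall>g\<in>Gall. isgen d g"
  by (auto simp: Gall_def isgen_Wg)
lemma Gall_comm: "\<forall>g\<in>Gall. \<forall>h\<in>Gall. brr r g h = (\<lambda>_. 0)"
  by (auto simp: Gall_def brr_WW)

lemma Hz0: "t \<in> {1..p} \<Longrightarrow> t \<noteq> m \<Longrightarrow> \<forall>g\<in>set u. isgen d g \<Longrightarrow> eqM d r (act a (u @ [Zg t m])) (\<lambda>_. 0)"
  using eq_left[OF H0, of t u] by (simp add: fmul_wd_wd_assoc fmul_zero_right)

lemma Hz1: "\<forall>g\<in>set u. isgen d g \<Longrightarrow> eqM d r (act a (u @ [Zg m m])) (\<lambda>x. \<alpha> * of_nat m * act a u x)"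
  using eq_left[OF H1, of u] by (simp add: fmul_wd_wd_assoc fmul_smult_right)

lemma Gm_isgen: "set R \<subseteq> Gm m \<Longrightarrow> \<forall>g\<in>set R. isgen d g"
  using d1 by (auto simp: Gm_def isgen_Wg)

lemma passX: "set R \<subseteq> Gm m \<Longrightarrow> \<forall>g\<in>set u. isgen d g \<Longrightarrow> \<forall>g\<in>set w. isgen d g \<Longrightarrow>
   eqM d r (act a (u @ [Xg m] @ R @ w)) (act a (u @ R @ [Xg m] @ w))"
  using d1 by (intro eq_pass[OF ga]) (auto simp: Gm_def isgen_Wg isgen_Xg brr_XW)

lemma passZ: "k \<ge> 1 \<Longrightarrow> set R \<subseteq> Gm m \<Longrightarrow> \<forall>g\<in>set u. isgen d g \<Longrightarrow> \<forall>g\<in>set w. isgen d g \<Longrightarrow>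
   eqM d r (act a (u @ [Zg k m] @ R @ w)) (act a (u @ R @ [Zg k m] @ w))"
  using d1 by (intro eq_pass[OF ga]) (auto simp: Gm_def isgen_Wg isgen_Zg brr_ZW)

lemma core1:
  assumes R: "set R \<subseteq> Gm m"
  shows "eqM d r (act a (Xg m # Wg m m # R))
     (\<lambda>x. act a (Wg m m # R @ [Xg m]) x + (2 * of_nat m ^ 2 * (2 * \<alpha> + r)) * act a R x)"
proof -
  have iR: "\<forall>g\<in>set R. isgen d g" using Gm_isgen[OF R] .
  have "eqM d r (act a ([] @ [Xg m, Wg m m] @ R))
     (\<lambda>x. act a ([] @ [Wg m m, Xg m] @ R) x + ((4 * of_nat m) * act a ([] @ [Zg m m] @ R) x
          + (2 * r * of_nat m ^ 2) * act a ([] @ [None] @ R) x))"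
    using d1 m1 iR by (intro eq_comm2[OF ga]) (auto simp: isgen_Xg isgen_Wg brr_XWmm)
  also have "eqM d r \<dots> (\<lambda>x. act a (Wg m m # R @ [Xg m]) x + ((4 * of_nat m) * (\<alpha> * of_nat m * act a R x)
          + (2 * r * of_nat m ^ 2) * act a R x))"
  proof (intro eq_add eq_smult)
    show "eqM d r (act a ([] @ [Wg m m, Xg m] @ R)) (act a (Wg m m # R @ [Xg m]))"
      using passX[OF R, of "[Wg m m]" "[]"] d1 by (simp add: isgen_Wg)
    have "eqM d r (act a ([] @ [Zg m m] @ R @ [])) (act a ([] @ R @ [Zg m m] @ []))"
      using passZ[OF m1 R, of "[]" "[]"] by simp
    also have "eqM d r \<dots> (\<lambda>x. \<alpha> * of_nat m * act a R x)"
      using Hz1[of R] iR by simp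
    finally show "eqM d r (act a ([] @ [Zg m m] @ R)) (\<lambda>x. \<alpha> * of_nat m * act a R x)" by simp
    show "eqM d r (act a ([] @ [None] @ R)) (act a R)"
      using eq_None[OF ga, of "[]" R] iR by simp
  qed
  also have "\<dots> = (\<lambda>x. act a (Wg m m # R @ [Xg m]) x + (2 * of_nat m ^ 2 * (2 * \<alpha> + r)) * act a R x)"
    by (simp add: fun_eq_iff algebra_simps power2_eq_square)
  finally show ?thesis by simp
qed

lemma core2:
  assumes R: "set R \<subseteq> Gm m" and ab: "a' \<in> {1..p}" "b \<in> {1..p}" "a' \<noteq> m" "b \<noteq> m"
  shows "eqM d r (act a (Xg m # Wg m b # Wg a' m # R))
     (\<lambda>x. act a (Wg m b # Wg a' m # R @ [Xg m]) x + (2 * of_nat m ^ 2) * act a (Wg a' b # R) x)"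
proof -
  have iR: "\<forall>g\<in>set R. isgen d g" using Gm_isgen[OF R] .
  have a1: "a' \<ge> 1" "b \<ge> 1" using ab by auto
  have "eqM d r (act a ([] @ [Xg m, Wg m b] @ (Wg a' m # R)))
     (\<lambda>x. act a ([] @ [Wg m b, Xg m] @ (Wg a' m # R)) x + (2 * of_nat m) * act a ([] @ [Zg b m] @ (Wg a' m # R)) x)"
    using d1 m1 iR a1 ab by (intro eq_comm1[OF ga]) (auto simp: isgen_Xg isgen_Wg brr_XWmb)
  also have "eqM d r \<dots> (\<lambda>x. (act a (Wg m b # Wg a' m # R @ [Xg m]) x + (2 * of_nat m) * 0)
       + (2 * of_nat m) * (0 + of_nat m * act a (Wg a' b # R) x))"
  proof (intro eq_add eq_smult)
    have "eqM d r (act a ([Wg m b] @ [Xg m, Wg a' m] @ R))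
       (\<lambda>x. act a ([Wg m b] @ [Wg a' m, Xg m] @ R) x + (2 * of_nat m) * act a ([Wg m b] @ [Zg a' m] @ R) x)"
      using d1 m1 iR a1 ab by (intro eq_comm1[OF ga]) (auto simp: isgen_Xg isgen_Wg brr_XWmb Wg_sym[of a' m])
    also have "eqM d r \<dots> (\<lambda>x. act a (Wg m b # Wg a' m # R @ [Xg m]) x + (2 * of_nat m) * 0)"
    proof (intro eq_add eq_smult)
      show "eqM d r (act a ([Wg m b] @ [Wg a' m, Xg m] @ R)) (act a (Wg m b # Wg a' m # R @ [Xg m]))"
        using passX[OF R, of "[Wg m b, Wg a' m]" "[]"] d1 by (simp add: isgen_Wg)
      have "eqM d r (act a ([Wg m b] @ [Zg a' m] @ R @ [])) (act a ([Wg m b] @ R @ [Zg a' m] @ []))"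
        using passZ[OF a1(1) R, of "[Wg m b]" "[]"] d1 by (simp add: isgen_Wg)
      also have "eqM d r \<dots> (\<lambda>_. 0)"
        using Hz0[of a' "Wg m b # R"] ab iR d1 by (simp add: isgen_Wg)
      finally show "eqM d r (act a ([Wg m b] @ [Zg a' m] @ R)) (\<lambda>_. 0)" by simp
    qed
    finally show "eqM d r (act a ([] @ [Wg m b, Xg m] @ Wg a' m # R))
       (\<lambda>x. act a (Wg m b # Wg a' m # R @ [Xg m]) x + (2 * of_nat m) * 0)" by simp
    have "eqM d r (act a ([] @ [Zg b m, Wg a' m] @ R))
       (\<lambda>x. act a ([] @ [Wg a' m, Zg b m] @ R) x + of_nat m * act a ([] @ [Wg a' b] @ R) x)"
      using d1 m1 iR a1 ab by (intro eq_comm1[OF ga]) (auto simp: isgen_Zg isgen_Wg brr_ZWam)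
    also have "eqM d r \<dots> (\<lambda>x. 0 + of_nat m * act a (Wg a' b # R) x)"
    proof (intro eq_add eq_smult)
      have "eqM d r (act a ([Wg a' m] @ [Zg b m] @ R @ [])) (act a ([Wg a' m] @ R @ [Zg b m] @ []))"
        using passZ[OF a1(2) R, of "[Wg a' m]" "[]"] d1 by (simp add: isgen_Wg)
      also have "eqM d r \<dots> (\<lambda>_. 0)"
        using Hz0[of b "Wg a' m # R"] ab iR d1 by (simp add: isgen_Wg)
      finally show "eqM d r (act a ([] @ [Wg a' m, Zg b m] @ R)) (\<lambda>_. 0)" by simp
      show "eqM d r (act a ([] @ [Wg a' b] @ R)) (act a (Wg a' b # R))" by (simp add: eq_refl)
    qed
    finally show "eqM d r (act a ([] @ [Zg b m] @ Wg a' m # R)) (\<lambda>x. 0 + of_nat m * act a (Wg a' b # R) x)" by simp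
  qed
  also have "\<dots> = (\<lambda>x. act a (Wg m b # Wg a' m # R @ [Xg m]) x + (2 * of_nat m ^ 2) * act a (Wg a' b # R) x)"
    by (simp add: fun_eq_iff algebra_simps power2_eq_square)
  finally show ?thesis by simp
qed


lemma reord:
  assumes "set R \<subseteq> Gall" "mset R = mset R'" "\<forall>g\<in>set u. isgen d g" "\<forall>g\<in>set w. isgen d g"
  shows "eqM d r (act a (u @ R @ w)) (act a (u @ R' @ w))"
  using eq_reorder[OF ga Gall_isgen[OF d1] Gall_comm assms] .

lemma WL_Gall: "\<sigma> permutes {1..p} \<Longrightarrow> A \<subseteq> {1..p} \<Longrightarrow> set (WL \<sigma> A) \<subseteq> Gall"
  using permutes_in_image[of \<sigma> "{1..p}"]
  by (auto simp: set_WL[OF finite_subset[OF _ finite_atLeastAtMost]] Gall_def) (metis atLeastAtMost_iff subset_iff)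

lemma isgen_WL: "\<sigma> permutes {1..p} \<Longrightarrow> A \<subseteq> {1..p} \<Longrightarrow> \<forall>g\<in>set (WL \<sigma> A). isgen d g"
  using WL_Gall Gall_isgen[OF d1] by blast

lemma sig1:
  assumes \<sigma>: "\<sigma> permutes {1..p}" and fx: "\<sigma> m = m"
  shows "eqM d r (act a (Xg m # WL \<sigma> {1..p}))
     (\<lambda>x. act a (WL \<sigma> {1..p} @ [Xg m]) x + (2 * of_nat m ^ 2 * (2 * \<alpha> + r)) * act a (WL \<sigma> ({1..p} - {m})) x)"
proof -
  define R where "R = WL \<sigma> ({1..p} - {m})"
  have mS: "m \<in> {1..p}" using m1 mp by auto
  have R: "set R \<subseteq> Gm m"
  proof
    fix g assume "g \<in> set R"
    then have "g \<in> (\<lambda>q. Wg q (\<sigma> q)) ` ({1..p} - {m})" unfolding R_def by (simp add: set_WL)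
    then obtain q where q: "q \<in> {1..p} - {m}" "g = Wg q (\<sigma> q)" by blast
    have "\<sigma> q \<in> {1..p}" using permutes_in_image[OF \<sigma>] q by auto
    moreover have "\<sigma> q \<noteq> m"
    proof
      assume "\<sigma> q = m"
      then have "\<sigma> q = \<sigma> m" using fx by simp
      then have "q = m" using permutes_inj[OF \<sigma>] by (simp add: inj_eq)
      with q show False by simp
    qed
    ultimately show "g \<in> Gm m" using q by (auto simp: Gm_def)
  qed
  have e: "{1..p} = insert m ({1..p} - {m})" using mS by auto
  have "mset_set {1..p} = mset_set (insert m ({1..p} - {m}))" using e by (rule arg_cong)
  also have "\<dots> = add_mset m (mset_set ({1..p} - {m}))" by (intro mset_set.insert) auto
  finally have e2: "mset_set {1..p} = add_mset m (mset_set ({1..p} - {m}))" .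
  have ms: "mset (WL \<sigma> {1..p}) = mset (Wg m m # R)"
    unfolding R_def mset_WL[OF finite_atLeastAtMost] e2 by (simp add: fx mset_WL)
  have iX: "isgen d (Xg m)" using d1 by (rule isgen_Xg)
  have "eqM d r (act a ([Xg m] @ WL \<sigma> {1..p} @ [])) (act a ([Xg m] @ (Wg m m # R) @ []))"
    using reord[OF WL_Gall[OF \<sigma> order_refl] ms, of "[Xg m]" "[]"] iX by simp
  also have "eqM d r \<dots> (\<lambda>x. act a (Wg m m # R @ [Xg m]) x + (2 * of_nat m ^ 2 * (2 * \<alpha> + r)) * act a R x)"
    using core1[OF R] by simp
  also have "eqM d r \<dots> (\<lambda>x. act a (WL \<sigma> {1..p} @ [Xg m]) x + (2 * of_nat m ^ 2 * (2 * \<alpha> + r)) * act a R x)"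
  proof (intro eq_add eq_refl)
    have "eqM d r (act a ([] @ (Wg m m # R) @ [Xg m])) (act a ([] @ WL \<sigma> {1..p} @ [Xg m]))"
    proof -
      have "set (Wg m m # R) \<subseteq> Gall" using WL_Gall[OF \<sigma> order_refl] mset_eq_setD[OF ms] by simp
      then show ?thesis using reord[OF _ ms[symmetric], of "[]" "[Xg m]"] iX by simp
    qed
    then show "eqM d r (act a (Wg m m # R @ [Xg m])) (act a (WL \<sigma> {1..p} @ [Xg m]))" by simp
  qed
  finally show ?thesis unfolding R_def by simp
qed


lemma sig2:
  assumes \<sigma>: "\<sigma> permutes {1..p}" and nf: "\<sigma> m \<noteq> m"
  shows "eqM d r (act a (Xg m # WL \<sigma> {1..p}))
     (\<lambda>x. act a (WL \<sigma> {1..p} @ [Xg m]) x + (2 * of_nat m ^ 2) * act a (WL (\<sigma> \<circ> transpose (inv \<sigma> m) m) ({1..p} - {m})) x)"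
proof -
  define a' where "a' = inv \<sigma> m"
  define b where "b = \<sigma> m"
  define \<tau> where "\<tau> = \<sigma> \<circ> transpose a' m"
  define R where "R = WL \<sigma> ({1..p} - {m, a'})"
  have mS: "m \<in> {1..p}" using m1 mp by auto
  have sa: "\<sigma> a' = m" unfolding a'_def using permutes_inverses(1)[OF \<sigma>] by simp
  have aS: "a' \<in> {1..p}" unfolding a'_def using permutes_in_image[OF permutes_inv[OF \<sigma>]] mS by simp
  have am: "a' \<noteq> m" using sa nf by auto
  have bS: "b \<in> {1..p}" unfolding b_def using permutes_in_image[OF \<sigma>] mS by simp
  have bm: "b \<noteq> m" unfolding b_def using nf .
  have \<tau>: "\<tau> permutes {1..p}" unfolding \<tau>_def
    using permutes_compose[OF permutes_swap_id[OF aS mS] \<sigma>] by simp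
  have R: "set R \<subseteq> Gm m"
  proof
    fix g assume "g \<in> set R"
    then have "g \<in> (\<lambda>q. Wg q (\<sigma> q)) ` ({1..p} - {m, a'})" unfolding R_def by (simp add: set_WL)
    then obtain q where q: "q \<in> {1..p} - {m, a'}" "g = Wg q (\<sigma> q)" by blast
    have "\<sigma> q \<in> {1..p}" using permutes_in_image[OF \<sigma>] q by auto
    moreover have "\<sigma> q \<noteq> m"
    proof
      assume "\<sigma> q = m"
      then have "\<sigma> q = \<sigma> a'" using sa by simp
      then have "q = a'" using permutes_inj[OF \<sigma>] by (simp add: inj_eq)
      with q show False by simp
    qed
    ultimately show "g \<in> Gm m" using q by (auto simp: Gm_def)
  qed
  have e: "{1..p} = insert m (insert a' ({1..p} - {m, a'}))" using mS aS by auto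
  have "mset_set {1..p} = mset_set (insert m (insert a' ({1..p} - {m, a'})))" using e by (rule arg_cong)
  also have "\<dots> = add_mset m (mset_set (insert a' ({1..p} - {m, a'})))" using am by (intro mset_set.insert) auto
  also have "\<dots> = add_mset m (add_mset a' (mset_set ({1..p} - {m, a'})))" by (subst mset_set.insert) auto
  finally have e2: "mset_set {1..p} = add_mset m (add_mset a' (mset_set ({1..p} - {m, a'})))" .
  have ms: "mset (WL \<sigma> {1..p}) = mset (Wg m b # Wg a' m # R)"
    unfolding R_def mset_WL[OF finite_atLeastAtMost] e2 by (simp add: sa b_def mset_WL)
  have e3: "{1..p} - {m} = insert a' ({1..p} - {m, a'})" using aS am by auto
  have "mset_set ({1..p} - {m}) = mset_set (insert a' ({1..p} - {m, a'}))" using e3 by (rule arg_cong)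
  also have "\<dots> = add_mset a' (mset_set ({1..p} - {m, a'}))" by (intro mset_set.insert) auto
  finally have e4: "mset_set ({1..p} - {m}) = add_mset a' (mset_set ({1..p} - {m, a'}))" .
  have ta: "\<tau> a' = b" unfolding \<tau>_def b_def by simp
  have tq: "\<And>q. q \<in> {1..p} - {m, a'} \<Longrightarrow> \<tau> q = \<sigma> q" unfolding \<tau>_def by auto
  have "image_mset (\<lambda>q. Wg q (\<tau> q)) (mset_set ({1..p} - {m, a'})) = image_mset (\<lambda>q. Wg q (\<sigma> q)) (mset_set ({1..p} - {m, a'}))"
    by (rule image_mset_cong) (simp add: tq)
  then have ms2: "mset (WL \<tau> ({1..p} - {m})) = mset (Wg a' b # R)"
    unfolding R_def mset_WL[OF finite_Diff[OF finite_atLeastAtMost]] e4 by (simp add: ta mset_WL)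
  have iX: "isgen d (Xg m)" using d1 by (rule isgen_Xg)
  have "eqM d r (act a ([Xg m] @ WL \<sigma> {1..p} @ [])) (act a ([Xg m] @ (Wg m b # Wg a' m # R) @ []))"
    using reord[OF WL_Gall[OF \<sigma> order_refl] ms, of "[Xg m]" "[]"] iX by simp
  also have "eqM d r \<dots> (\<lambda>x. act a (Wg m b # Wg a' m # R @ [Xg m]) x + (2 * of_nat m ^ 2) * act a (Wg a' b # R) x)"
    using core2[OF R aS bS am bm] by simp
  also have "eqM d r \<dots> (\<lambda>x. act a (WL \<sigma> {1..p} @ [Xg m]) x + (2 * of_nat m ^ 2) * act a (WL \<tau> ({1..p} - {m})) x)"
  proof (intro eq_add eq_smult)
    have "set (Wg m b # Wg a' m # R) \<subseteq> Gall" using WL_Gall[OF \<sigma> order_refl] mset_eq_setD[OF ms] by simp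
    then show "eqM d r (act a (Wg m b # Wg a' m # R @ [Xg m])) (act a (WL \<sigma> {1..p} @ [Xg m]))"
      using reord[OF _ ms[symmetric], of "[]" "[Xg m]"] iX by simp
    have "set (Wg a' b # R) \<subseteq> Gall" using WL_Gall[OF \<tau>, of "{1..p} - {m}"] mset_eq_setD[OF ms2] by auto
    then show "eqM d r (act a (Wg a' b # R)) (act a (WL \<tau> ({1..p} - {m})))"
      using reord[OF _ ms2[symmetric], of "[]" "[]"] by simp
  qed
  finally show ?thesis unfolding \<tau>_def a'_def by simp
qed


lemma perm_fix_iff: "(\<sigma> permutes {1..p} \<and> \<sigma> m = m) \<longleftrightarrow> \<sigma> permutes ({1..p} - {m})"
proof
  assume h: "\<sigma> permutes {1..p} \<and> \<sigma> m = m"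
  show "\<sigma> permutes ({1..p} - {m})"
    by (rule permutes_superset[OF conjunct1[OF h]]) (use h in auto)
next
  assume h: "\<sigma> permutes ({1..p} - {m})"
  show "\<sigma> permutes {1..p} \<and> \<sigma> m = m"
    using permutes_subset[OF h, of "{1..p}"] permutes_not_in[OF h, of m] by auto
qed

lemma sumT:
  "(\<Sum>\<sigma>\<in>{\<sigma>. \<sigma> permutes {1..p}}. of_int (sign \<sigma>) *
      (if \<sigma> m = m then (2 * of_nat m ^ 2 * (2 * \<alpha> + r)) * act a (WL \<sigma> ({1..p} - {m})) x
       else (2 * of_nat m ^ 2) * act a (WL (\<sigma> \<circ> transpose (inv \<sigma> m) m) ({1..p} - {m})) x))
   = (2 * of_nat m ^ 2 * (2 * \<alpha> + r) - 2 * of_nat m ^ 2 * of_nat (p - 1)) *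
     (\<Sum>\<tau>\<in>{\<tau>. \<tau> permutes ({1..p} - {m})}. of_int (sign \<tau>) * act a (WL \<tau> ({1..p} - {m})) x)"
  (is "?L = _")
proof -
  define S' where "S' = {1..p} - {m}"
  define P where "P = {\<sigma>. \<sigma> permutes {1..p}}"
  define P' where "P' = {\<tau>. \<tau> permutes S'}"
  define c1 where "c1 = 2 * of_nat m ^ 2 * (2 * \<alpha> + r)"
  define c2 :: complex where "c2 = 2 * of_nat m ^ 2"
  define D where "D = (\<Sum>\<tau>\<in>P'. of_int (sign \<tau>) * act a (WL \<tau> S') x)"
  define f where "f = (\<lambda>\<sigma>. of_int (sign \<sigma>) *
      (if \<sigma> m = m then c1 * act a (WL \<sigma> S') x
       else c2 * act a (WL (\<sigma> \<circ> transpose (inv \<sigma> m) m) S') x))"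
  have mS: "m \<in> {1..p}" using m1 mp by auto
  have finP: "finite P" unfolding P_def by (simp add: finite_permutations)
  have finS': "finite S'" unfolding S'_def by simp
  have "?L = sum f P" unfolding f_def P_def S'_def c1_def c2_def by simp
  also have "\<dots> = sum f (P \<inter> {\<sigma>. \<sigma> m = m}) + sum f (P - {\<sigma>. \<sigma> m = m})"
    by (rule sum.Int_Diff[OF finP])
  also have "sum f (P \<inter> {\<sigma>. \<sigma> m = m}) = c1 * D"
  proof -
    have "P \<inter> {\<sigma>. \<sigma> m = m} = P'" unfolding P_def P'_def S'_def using perm_fix_iff by auto
    moreover have "\<And>\<sigma>. \<sigma> \<in> P' \<Longrightarrow> f \<sigma> = c1 * (of_int (sign \<sigma>) * act a (WL \<sigma> S') x)"
      unfolding f_def P'_def S'_def using perm_fix_iff by auto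
    ultimately show ?thesis unfolding D_def by (simp add: sum_distrib_left)
  qed
  also have "sum f (P - {\<sigma>. \<sigma> m = m}) = (\<Sum>(a', \<tau>)\<in>S' \<times> P'. - c2 * (of_int (sign \<tau>) * act a (WL \<tau> S') x))"
  proof (rule sum.reindex_bij_witness[where i="\<lambda>(a', \<tau>). \<tau> \<circ> transpose a' m" and j="\<lambda>\<sigma>. (inv \<sigma> m, \<sigma> \<circ> transpose (inv \<sigma> m) m)"])
    fix \<sigma> assume h: "\<sigma> \<in> P - {\<sigma>. \<sigma> m = m}"
    then have \<sigma>: "\<sigma> permutes {1..p}" and nf: "\<sigma> m \<noteq> m" unfolding P_def by auto
    define a' where "a' = inv \<sigma> m"
    have sa: "\<sigma> a' = m" unfolding a'_def using permutes_inverses(1)[OF \<sigma>] by simp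
    have aS: "a' \<in> {1..p}" unfolding a'_def using permutes_in_image[OF permutes_inv[OF \<sigma>]] mS by simp
    have am: "a' \<noteq> m" using sa nf by auto
    have \<tau>: "\<sigma> \<circ> transpose a' m permutes {1..p}"
      using permutes_compose[OF permutes_swap_id[OF aS mS] \<sigma>] by simp
    have "(\<sigma> \<circ> transpose a' m) m = m" using sa by simp
    then have \<tau>': "\<sigma> \<circ> transpose a' m permutes S'" using perm_fix_iff \<tau> unfolding S'_def by blast
    show "(case (inv \<sigma> m, \<sigma> \<circ> transpose (inv \<sigma> m) m) of (a', \<tau>) \<Rightarrow> \<tau> \<circ> transpose a' m) = \<sigma>"
      by (simp add: o_assoc[symmetric])
    show "(inv \<sigma> m, \<sigma> \<circ> transpose (inv \<sigma> m) m) \<in> S' \<times> P'"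
      using \<tau>' aS am unfolding a'_def S'_def P'_def by auto
    have perm: "permutation \<sigma>" using \<sigma> by (auto simp: permutation_permutes)
    have "sign (\<sigma> \<circ> transpose a' m) = - sign \<sigma>"
      using am by (simp add: sign_compose[OF perm permutation_swap_id] sign_swap_id)
    then show "(case (inv \<sigma> m, \<sigma> \<circ> transpose (inv \<sigma> m) m) of (a', \<tau>) \<Rightarrow> - c2 * (of_int (sign \<tau>) * act a (WL \<tau> S') x)) = f \<sigma>"
      unfolding f_def using nf a'_def by simp
  next
    fix b assume h: "b \<in> S' \<times> P'"
    obtain a' \<tau> where b: "b = (a', \<tau>)" by (cases b)
    have aS: "a' \<in> S'" and \<tau>: "\<tau> permutes S'" using h b unfolding P'_def by auto
    have \<tau>S: "\<tau> permutes {1..p}" and tm: "\<tau> m = m" using perm_fix_iff \<tau> unfolding S'_def by auto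
    have aS2: "a' \<in> {1..p}" "a' \<noteq> m" using aS unfolding S'_def by auto
    have \<sigma>: "\<tau> \<circ> transpose a' m permutes {1..p}"
      using permutes_compose[OF permutes_swap_id[OF aS2(1) mS] \<tau>S] by simp
    have sa: "(\<tau> \<circ> transpose a' m) a' = m" using tm by simp
    have inv: "inv (\<tau> \<circ> transpose a' m) m = a'" using permutes_inv_eq[OF \<sigma>] sa by simp
    show "(case case b of (a', \<tau>) \<Rightarrow> \<tau> \<circ> transpose a' m of \<sigma> \<Rightarrow> (inv \<sigma> m, \<sigma> \<circ> transpose (inv \<sigma> m) m)) = b"
      using inv b by (simp add: o_assoc[symmetric])
    have "\<tau> a' \<in> S'" using permutes_in_image[OF \<tau>] aS by simp
    then have "(\<tau> \<circ> transpose a' m) m \<noteq> m" unfolding S'_def by simp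
    then show "(case b of (a', \<tau>) \<Rightarrow> \<tau> \<circ> transpose a' m) \<in> P - {\<sigma>. \<sigma> m = m}"
      using \<sigma> b unfolding P_def by simp
  qed
  also have "\<dots> = (\<Sum>a'\<in>S'. \<Sum>\<tau>\<in>P'. - c2 * (of_int (sign \<tau>) * act a (WL \<tau> S') x))"
    by (rule sum.cartesian_product[symmetric])
  also have "\<dots> = of_nat (card S') * (- c2 * D)"
    unfolding D_def by (simp add: sum_distrib_left)
  also have "card S' = p - 1" unfolding S'_def using mS by simp
  finally show ?thesis unfolding c1_def c2_def D_def P'_def S'_def by (simp add: algebra_simps)
qed


lemma main_ctx:
  "eqM d r (\<lambda>x. \<Sum>\<sigma>\<in>{\<sigma>. \<sigma> permutes {1..p}}. of_int (sign \<sigma>) * act a (Xg m # WL \<sigma> {1..p}) x)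
    (\<lambda>x. (2 * of_nat m ^ 2 * (2 * \<alpha> + r) - 2 * of_nat m ^ 2 * of_nat (p - 1)) *
        (\<Sum>\<tau>\<in>{\<tau>. \<tau> permutes ({1..p} - {m})}. of_int (sign \<tau>) * act a (WL \<tau> ({1..p} - {m})) x)
      + (\<Sum>\<sigma>\<in>{\<sigma>. \<sigma> permutes {1..p}}. of_int (sign \<sigma>) * act a (WL \<sigma> {1..p} @ [Xg m]) x))"
proof -
  define T where "T = (\<lambda>\<sigma> x. if \<sigma> m = m then (2 * of_nat m ^ 2 * (2 * \<alpha> + r)) * act a (WL \<sigma> ({1..p} - {m})) x
       else (2 * of_nat m ^ 2) * act a (WL (\<sigma> \<circ> transpose (inv \<sigma> m) m) ({1..p} - {m})) x)"
  have "eqM d r (\<lambda>x. \<Sum>\<sigma>\<in>{\<sigma>. \<sigma> permutes {1..p}}. of_int (sign \<sigma>) * act a (Xg m # WL \<sigma> {1..p}) x)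
     (\<lambda>x. \<Sum>\<sigma>\<in>{\<sigma>. \<sigma> permutes {1..p}}. of_int (sign \<sigma>) * (\<lambda>x. act a (WL \<sigma> {1..p} @ [Xg m]) x + T \<sigma> x) x)"
  proof (rule eq_sum)
    show "finite {\<sigma>. \<sigma> permutes {1..p}}" by (simp add: finite_permutations)
    fix \<sigma> assume "\<sigma> \<in> {\<sigma>. \<sigma> permutes {1..p}}"
    then have \<sigma>: "\<sigma> permutes {1..p}" by simp
    show "eqM d r (act a (Xg m # WL \<sigma> {1..p})) (\<lambda>x. act a (WL \<sigma> {1..p} @ [Xg m]) x + T \<sigma> x)"
    proof (cases "\<sigma> m = m")
      case True
      then show ?thesis using sig1[OF \<sigma> True] unfolding T_def by simp
    next
      case False
      then show ?thesis using sig2[OF \<sigma> False] unfolding T_def by simp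
    qed
  qed
  also have "\<dots> = (\<lambda>x. (2 * of_nat m ^ 2 * (2 * \<alpha> + r) - 2 * of_nat m ^ 2 * of_nat (p - 1)) *
        (\<Sum>\<tau>\<in>{\<tau>. \<tau> permutes ({1..p} - {m})}. of_int (sign \<tau>) * act a (WL \<tau> ({1..p} - {m})) x)
      + (\<Sum>\<sigma>\<in>{\<sigma>. \<sigma> permutes {1..p}}. of_int (sign \<sigma>) * act a (WL \<sigma> {1..p} @ [Xg m]) x))"
  proof
    fix x
    have "(\<Sum>\<sigma>\<in>{\<sigma>. \<sigma> permutes {1..p}}. of_int (sign \<sigma>) * (act a (WL \<sigma> {1..p} @ [Xg m]) x + T \<sigma> x))
       = (\<Sum>\<sigma>\<in>{\<sigma>. \<sigma> permutes {1..p}}. of_int (sign \<sigma>) * act a (WL \<sigma> {1..p} @ [Xg m]) x)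
         + (\<Sum>\<sigma>\<in>{\<sigma>. \<sigma> permutes {1..p}}. of_int (sign \<sigma>) * T \<sigma> x)"
      by (simp add: distrib_left sum.distrib)
    also have "(\<Sum>\<sigma>\<in>{\<sigma>. \<sigma> permutes {1..p}}. of_int (sign \<sigma>) * T \<sigma> x) =
       (2 * of_nat m ^ 2 * (2 * \<alpha> + r) - 2 * of_nat m ^ 2 * of_nat (p - 1)) *
        (\<Sum>\<tau>\<in>{\<tau>. \<tau> permutes ({1..p} - {m})}. of_int (sign \<tau>) * act a (WL \<tau> ({1..p} - {m})) x)"
      unfolding T_def by (rule sumT)
    finally show "(\<Sum>\<sigma>\<in>{\<sigma>. \<sigma> permutes {1..p}}. of_int (sign \<sigma>) * (\<lambda>x. act a (WL \<sigma> {1..p} @ [Xg m]) x + T \<sigma> x) x) =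
       (2 * of_nat m ^ 2 * (2 * \<alpha> + r) - 2 * of_nat m ^ 2 * of_nat (p - 1)) *
        (\<Sum>\<tau>\<in>{\<tau>. \<tau> permutes ({1..p} - {m})}. of_int (sign \<tau>) * act a (WL \<tau> ({1..p} - {m})) x)
      + (\<Sum>\<sigma>\<in>{\<sigma>. \<sigma> permutes {1..p}}. of_int (sign \<sigma>) * act a (WL \<sigma> {1..p} @ [Xg m]) x)"
      by simp
  qed
  finally show ?thesis .
qed

end




lemma vF_X: "vF (int m) (int m) = wd [Xg m]"
  by (simp add: vF_def vel_def liftL_single Xg_def)

lemma vF_Z: "vF (- int t) (int m) = wd [Zg t m]"
  by (simp add: vF_def vel_def liftL_single Zg_def)

lemma vF_W: "q \<ge> 1 \<Longrightarrow> vF (- int q) (- int t) = wd [Wg q t]"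
  by (auto simp: vF_def vel_def liftL_single Wg_def max_def min_def)

lemma prodF_wd: "prodF (map (\<lambda>q. wd [g q]) xs) = wd (map g xs)"
  by (induction xs) (auto simp: prodF_def wd_wd)

lemma detS_eq: assumes "finite A" "\<forall>q\<in>A. q \<ge> 1"
  shows "detS A = (\<lambda>x. \<Sum>\<sigma>\<in>{\<sigma>. \<sigma> permutes A}. of_int (sign \<sigma>) * wd (WL \<sigma> A) x)"
proof -
  have e: "prodF (map (\<lambda>q. vF (- int q) (- int (\<sigma> q))) (sorted_list_of_set A)) = wd (WL \<sigma> A)" for \<sigma>
  proof -
    have "map (\<lambda>q. vF (- int q) (- int (\<sigma> q))) (sorted_list_of_set A) = map (\<lambda>q. wd [Wg q (\<sigma> q)]) (sorted_list_of_set A)"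
      using assms by (intro map_cong) (auto simp: vF_W)
    then show ?thesis unfolding WL_def by (simp only: prodF_wd)
  qed
  show ?thesis unfolding detS_def e ..
qed

lemma A1_good: "d \<ge> 1 \<Longrightarrow> a \<in> A1 \<Longrightarrow> goodA d a"
  unfolding A1_def goodA_def by (fastforce simp: isgen_def)

theorem lemma6p3:
  fixes d p m :: nat and r \<alpha> :: complex and a :: felt
  assumes "d \<ge> 2" and "p \<ge> 1" and "1 \<le> m" and "m \<le> p"
    and "a \<in> A1"
    and "\<forall>t\<in>{1..p}. t \<noteq> m \<longrightarrow> eqM d r (fmul (vF (- int t) (int m)) a) (\<lambda>_. 0)"
    and "eqM d r (fmul (vF (- int m) (int m)) a) (\<lambda>x. \<alpha> * of_nat m * a x)"
  shows "eqM d r (fmul (vF (int m) (int m)) (fmul (detS {1..p}) a))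
           (\<lambda>x. 2 * of_nat m ^ 2 * (2 * \<alpha> + r - of_nat p + 1) * fmul (detS ({1..p} - {m})) a x
                + fmul (detS {1..p}) (fmul (vF (int m) (int m)) a) x)"
proof -
  have d1: "d \<ge> 1" using assms(1) by simp
  have ga: "goodA d a" using A1_good[OF d1 assms(5)] .
  have H0: "\<And>t. t \<in> {1..p} \<Longrightarrow> t \<noteq> m \<Longrightarrow> eqM d r (fmul (wd [Zg t m]) a) (\<lambda>_. 0)"
    using assms(6) by (simp add: vF_Z)
  have H1: "eqM d r (fmul (wd [Zg m m]) a) (\<lambda>x. \<alpha> * of_nat m * a x)"
    using assms(7) by (simp add: vF_Z)
  have m1: "m \<ge> 1" using assms(3) by simp
  note M = main_ctx[OF ga d1 m1 H0 assms(4) H1]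
  have dS: "detS {1..p} = (\<lambda>x. \<Sum>\<sigma>\<in>{\<sigma>. \<sigma> permutes {1..p}}. of_int (sign \<sigma>) * wd (WL \<sigma> {1..p}) x)"
    by (rule detS_eq) auto
  have dS': "detS ({1..p} - {m}) = (\<lambda>x. \<Sum>\<sigma>\<in>{\<sigma>. \<sigma> permutes ({1..p} - {m})}. of_int (sign \<sigma>) * wd (WL \<sigma> ({1..p} - {m})) x)"
    by (rule detS_eq) auto
  have L: "fmul (vF (int m) (int m)) (fmul (detS {1..p}) a) =
     (\<lambda>x. \<Sum>\<sigma>\<in>{\<sigma>. \<sigma> permutes {1..p}}. of_int (sign \<sigma>) * fmul (wd (Xg m # WL \<sigma> {1..p})) a x)"
    unfolding dS vF_X by (simp add: fmul_sum_left fmul_sum_right fmul_wd_wd_assoc)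
  have R1: "fmul (detS {1..p}) (fmul (vF (int m) (int m)) a) =
     (\<lambda>x. \<Sum>\<sigma>\<in>{\<sigma>. \<sigma> permutes {1..p}}. of_int (sign \<sigma>) * fmul (wd (WL \<sigma> {1..p} @ [Xg m])) a x)"
    unfolding dS vF_X by (simp add: fmul_sum_left fmul_wd_wd_assoc)
  have R2: "fmul (detS ({1..p} - {m})) a =
     (\<lambda>x. \<Sum>\<sigma>\<in>{\<sigma>. \<sigma> permutes ({1..p} - {m})}. of_int (sign \<sigma>) * fmul (wd (WL \<sigma> ({1..p} - {m}))) a x)"
    unfolding dS' by (simp add: fmul_sum_left)
  have c: "(2 * of_nat m ^ 2 * (2 * \<alpha> + r) - 2 * of_nat m ^ 2 * of_nat (p - 1) :: complex)
      = 2 * of_nat m ^ 2 * (2 * \<alpha> + r - of_nat p + 1)"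
    using assms(2) by (simp add: of_nat_diff algebra_simps)
  show ?thesis unfolding L R1 R2 using M unfolding c .
qed


end
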